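(* Let $G=(V,E)$ be a graph and $k\ge1$ an integer, and let $G_k$ be the graph obtained from $G$ by cloning every vertex exactly $k-1$ times. For a labeling $\mathbf{x}=(x_w)_{w\in V(G_k)}$ by indeterminates define the labeling $\mathbf{X}$ of $G$ by $X_a=(1+x_{a_1})(1+x_{a_2})\cdots(1+x_{a_k})-1$ for $a\in V$. Then $P(G_k;u,\mathbf{x})=P(G;u,\mathbf{X})$.
   Context: All graphs are finite and undirected, without multiple edges but possibly with self loops. For $A\subseteq V$, $G[A]$ is the induced subgraph; $rk(G)$ is the $\mathbb{F}_2$-rank of the adjacency matrix $(m_{ij})$ (with $m_{ij}=1$ iff $\{i,j\}\in E$, so $m_{ii}=1$ iff $i$ has a self loop; empty graph: rank $0$). For indeterminates $x_v$, $x_A=\prod_{v\in A}x_v$ and $P(G;u,\mathbf{x})=\sum_{A\subseteq V}x_Au^{rk(G[A])}$, with $0^0=1$. The graph $G_k$ ("each vertex cloned $k-1$ times") has vertex set $\{a_i: a\in V,\ 1\le i\le k\}$; for distinct $a,b\in V$, $a_i$ and $b_j$ are adjacent iff $\{a,b\}\in E$; and $a_i,a_j$ are adjacent (for $i=j$: $a_i$ carries a self loop) iff $a$ carries a self loop in $G$. Equivalently, $G_k$ arises by repeatedly applying the single-vertex cloning operation (a new vertex $a'$ joined to all neighbours of $a$ other than $a$, plus the edge $\{a,a'\}$ and a self loop at $a'$ if $a$ has a self loop). *)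

theory Defs
  imports Main
begin

text \<open>A graph is given by a finite vertex set V and a symmetric adjacency relation E
  (self loops E a a allowed, no multiple edges).\<close>

text \<open>A set S of vertices of A has F2-linearly independent rows in the adjacency matrix
  of G[A]: no nonempty subset T of S has rows summing (mod 2) to the zero vector.\<close>
definition f2_indep_rows :: "('a \<Rightarrow> 'a \<Rightarrow> bool) \<Rightarrow> 'a set \<Rightarrow> 'a set \<Rightarrow> bool" where
  "f2_indep_rows E A S \<longleftrightarrow> S \<subseteq> A \<and>
     (\<forall>T. T \<subseteq> S \<and> T \<noteq> {} \<longrightarrow> (\<exists>w\<in>A. odd (card {t\<in>T. E t w})))"

text \<open>rk(G[A]): F2-rank of the adjacency matrix of the induced subgraph G[A]
  (maximal number of F2-linearly independent rows); 0 for A = {}.\<close>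
definition f2_rank :: "('a \<Rightarrow> 'a \<Rightarrow> bool) \<Rightarrow> 'a set \<Rightarrow> nat" where
  "f2_rank E A = Max (card ` {S. f2_indep_rows E A S})"

definition interlace_P :: "'a set \<Rightarrow> ('a \<Rightarrow> 'a \<Rightarrow> bool) \<Rightarrow> 'r::comm_ring_1 \<Rightarrow> ('a \<Rightarrow> 'r) \<Rightarrow> 'r" where
  "interlace_P V E u x = (\<Sum>A\<in>Pow V. (\<Prod>v\<in>A. x v) * u ^ f2_rank E A)"

definition clone_vertices :: "'a set \<Rightarrow> nat \<Rightarrow> ('a \<times> nat) set" where
  "clone_vertices V k = V \<times> {1..k}"

definition clone_adj :: "('a \<Rightarrow> 'a \<Rightarrow> bool) \<Rightarrow> ('a \<times> nat) \<Rightarrow> ('a \<times> nat) \<Rightarrow> bool" where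
  "clone_adj E p q = (if fst p \<noteq> fst q then E (fst p) (fst q) else E (fst p) (fst p))"

end

theory Submission
  imports Defs "HOL-Library.FuncSet"
begin

lemma clone_adj_simp: "clone_adj E p q = E (fst p) (fst q)"
  by (simp add: clone_adj_def)

lemma indep1:
  assumes "f2_indep_rows E (fst ` A) S"
  shows "\<exists>S'. f2_indep_rows (clone_adj E) A S' \<and> card S' = card S"
proof -
  define \<sigma> where "\<sigma> a = (SOME p. p \<in> A \<and> fst p = a)" for a
  have sig: "\<sigma> a \<in> A \<and> fst (\<sigma> a) = a" if "a \<in> fst ` A" for a
  proof -
    have "\<exists>p. p \<in> A \<and> fst p = a" using that by auto
    then show ?thesis unfolding \<sigma>_def by (rule someI_ex)
  qed
  have SA: "S \<subseteq> fst ` A" using assms by (simp add: f2_indep_rows_def)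
  have inj: "inj_on \<sigma> S" by (metis SA sig inj_onI subsetD)
  have injfst: "inj_on fst (\<sigma> ` S)"
  proof (rule inj_onI)
    fix p q assume "p \<in> \<sigma> ` S" "q \<in> \<sigma> ` S" "fst p = fst q"
    then obtain a b where "a \<in> S" "b \<in> S" "p = \<sigma> a" "q = \<sigma> b" "fst p = fst q" by blast
    then show "p = q" using SA sig by (metis subsetD)
  qed
  have "f2_indep_rows (clone_adj E) A (\<sigma> ` S)"
    unfolding f2_indep_rows_def
  proof (intro conjI allI impI)
    show "\<sigma> ` S \<subseteq> A" using SA sig by (meson image_subsetI subsetD)
    fix T' assume T': "T' \<subseteq> \<sigma> ` S \<and> T' \<noteq> {}"
    have "fst ` T' \<subseteq> S"
    proof
      fix a assume "a \<in> fst ` T'"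
      then obtain p where "p \<in> T'" "a = fst p" by blast
      then obtain b where "b \<in> S" "p = \<sigma> b" using T' by blast
      then show "a \<in> S" using \<open>a = fst p\<close> SA sig by (metis subsetD)
    qed
    moreover have "fst ` T' \<noteq> {}" using T' by auto
    ultimately obtain w where w: "w \<in> fst ` A" and odd: "odd (card {t\<in>fst ` T'. E t w})"
      using assms unfolding f2_indep_rows_def by blast
    have ij: "inj_on fst {t'\<in>T'. E (fst t') w}" by (rule inj_on_subset[OF injfst]) (use T' in blast)
    have im: "fst ` {t'\<in>T'. E (fst t') w} = {t\<in>fst ` T'. E t w}" by auto
    have "card {t'\<in>T'. clone_adj E t' (\<sigma> w)} = card {t\<in>fst ` T'. E t w}"
      using sig[OF w] card_image[OF ij] im by (simp add: clone_adj_simp)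
    then show "\<exists>w\<in>A. odd (card {t \<in> T'. clone_adj E t w})"
      using sig[OF w] odd by metis
  qed
  moreover have "card (\<sigma> ` S) = card S" using card_image[OF inj] .
  ultimately show ?thesis by blast
qed

lemma indep2:
  assumes "f2_indep_rows (clone_adj E) A S'"
  shows "f2_indep_rows E (fst ` A) (fst ` S') \<and> card (fst ` S') = card S'"
proof -
  have SA: "S' \<subseteq> A" using assms by (simp add: f2_indep_rows_def)
  have inj: "inj_on fst S'"
  proof (rule inj_onI, rule ccontr)
    fix p q assume pq: "p \<in> S'" "q \<in> S'" "fst p = fst q" "p \<noteq> q"
    have "\<forall>w\<in>A. even (card {t\<in>{p,q}. clone_adj E t w})"
    proof
      fix w assume "w \<in> A"
      show "even (card {t\<in>{p,q}. clone_adj E t w})"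
      proof (cases "E (fst p) (fst w)")
        case True
        then have "{t\<in>{p,q}. clone_adj E t w} = {p,q}" using pq by (auto simp: clone_adj_simp)
        then show ?thesis using pq by simp
      next
        case False
        then have "{t\<in>{p,q}. clone_adj E t w} = {}" using pq by (auto simp: clone_adj_simp)
        then show ?thesis by (metis card.empty even_zero)
        qed
    qed
    moreover have "\<exists>w\<in>A. odd (card {t\<in>{p,q}. clone_adj E t w})"
    proof -
      have H: "\<forall>T. T \<subseteq> S' \<and> T \<noteq> {} \<longrightarrow> (\<exists>w\<in>A. odd (card {t\<in>T. clone_adj E t w}))"
        using assms by (simp add: f2_indep_rows_def)
      have "{p,q} \<subseteq> S' \<and> {p,q} \<noteq> {}" using pq by simp
      then show ?thesis using H by blast
    qed
    ultimately show False by blast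
  qed
  have "f2_indep_rows E (fst ` A) (fst ` S')"
    unfolding f2_indep_rows_def
  proof (intro conjI allI impI)
    show "fst ` S' \<subseteq> fst ` A" using SA by auto
    fix T assume T: "T \<subseteq> fst ` S' \<and> T \<noteq> {}"
    define T' where "T' = {p\<in>S'. fst p \<in> T}"
    have "T' \<subseteq> S'" unfolding T'_def by auto
    moreover have "T' \<noteq> {}"
    proof -
      obtain t where "t \<in> T" using T by blast
      then obtain p where "p \<in> S'" "fst p = t" using T by blast
      then have "p \<in> T'" unfolding T'_def using \<open>t \<in> T\<close> by simp
      then show ?thesis by blast
    qed
    ultimately have "T' \<subseteq> S'" "T' \<noteq> {}" by auto
    moreover have H: "\<forall>T. T \<subseteq> S' \<and> T \<noteq> {} \<longrightarrow> (\<exists>w\<in>A. odd (card {t\<in>T. clone_adj E t w}))"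
        using assms by (simp add: f2_indep_rows_def)
    ultimately obtain w where w: "w \<in> A" and odd: "odd (card {t\<in>T'. clone_adj E t w})"
      by blast
    have ij: "inj_on fst {t\<in>T'. clone_adj E t w}" using inj by (auto simp: inj_on_def T'_def)
    have im: "fst ` {t\<in>T'. clone_adj E t w} = {t\<in>T. E t (fst w)}"
      using T by (auto simp: T'_def clone_adj_simp)
    have c: "card {t\<in>T. E t (fst w)} = card {t\<in>T'. clone_adj E t w}"
      using card_image[OF ij] im by simp
    have "fst w \<in> fst ` A" using w by simp
    then show "\<exists>w\<in>fst ` A. odd (card {t\<in>T. E t w})" using odd c by metis
  qed
  then show ?thesis using card_image[OF inj] by simp
qed

lemma rank_clone: "f2_rank (clone_adj E) A = f2_rank E (fst ` A)"
proof -
  have "card ` {S. f2_indep_rows (clone_adj E) A S} = card ` {S. f2_indep_rows E (fst ` A) S}"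
  proof
    show "card ` {S. f2_indep_rows (clone_adj E) A S} \<subseteq> card ` {S. f2_indep_rows E (fst ` A) S}"
    proof
      fix n assume "n \<in> card ` {S. f2_indep_rows (clone_adj E) A S}"
      then obtain S where S: "f2_indep_rows (clone_adj E) A S" "n = card S" by blast
      then have "f2_indep_rows E (fst ` A) (fst ` S)" "n = card (fst ` S)" using indep2[OF S(1)] by auto
      then show "n \<in> card ` {S. f2_indep_rows E (fst ` A) S}" by blast
    qed
    show "card ` {S. f2_indep_rows E (fst ` A) S} \<subseteq> card ` {S. f2_indep_rows (clone_adj E) A S}"
    proof
      fix n assume "n \<in> card ` {S. f2_indep_rows E (fst ` A) S}"
      then obtain S where S: "f2_indep_rows E (fst ` A) S" "n = card S" by blast
      then obtain S' where "f2_indep_rows (clone_adj E) A S'" "card S' = n" using indep1 by metis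
      then show "n \<in> card ` {S. f2_indep_rows (clone_adj E) A S}" by blast
    qed
  qed
  then show ?thesis by (simp add: f2_rank_def)
qed

lemma sigma_restrict: "fst ` A = B \<Longrightarrow> A = Sigma B (restrict (\<lambda>a. {i. (a, i) \<in> A}) B)"
proof -
  assume "fst ` A = B"
  have "A = Sigma (fst ` A) (\<lambda>a. {i. (a, i) \<in> A})" by (auto intro: rev_image_eqI)
  also have "\<dots> = Sigma (fst ` A) (restrict (\<lambda>a. {i. (a, i) \<in> A}) (fst ` A))" by (rule Sigma_cong) auto
  finally show ?thesis using \<open>fst ` A = B\<close> by simp
qed

lemma key:
  fixes x :: "'a \<times> nat \<Rightarrow> 'r::comm_ring_1"
  assumes fK: "finite K" and fB: "finite B" and BV: "B \<subseteq> V"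
  shows "(\<Sum>A\<in>{A\<in>Pow (V \<times> K). fst ` A = B}. \<Prod>v\<in>A. x v)
        = (\<Prod>a\<in>B. (\<Prod>i\<in>K. 1 + x (a, i)) - 1)"
proof -
  have e1: "(\<Prod>i\<in>K. 1 + x (a, i)) - 1 = (\<Sum>C\<in>Pow K - {{}}. \<Prod>i\<in>C. x (a, i))" for a
  proof -
    have "(\<Prod>i\<in>K. 1 + x (a, i)) = (\<Prod>i\<in>K. x (a, i) + 1)" by (simp add: add.commute)
    also have "\<dots> = (\<Sum>C\<in>Pow K. \<Prod>i\<in>C. x (a, i))"
      using prod_add[OF fK, of "\<lambda>i. x (a,i)" "\<lambda>_. 1"] by simp
    also have "\<dots> = 1 + (\<Sum>C\<in>Pow K - {{}}. \<Prod>i\<in>C. x (a, i))"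
      using sum.remove[of "Pow K" "{}" "\<lambda>C. \<Prod>i\<in>C. x (a, i)"] fK by simp
    finally show ?thesis by simp
  qed
  have "(\<Prod>a\<in>B. (\<Prod>i\<in>K. 1 + x (a, i)) - 1) = (\<Prod>a\<in>B. \<Sum>C\<in>Pow K - {{}}. \<Prod>i\<in>C. x (a, i))"
    using e1 by simp
  also have "\<dots> = (\<Sum>f\<in>PiE B (\<lambda>_. Pow K - {{}}). \<Prod>a\<in>B. \<Prod>i\<in>f a. x (a, i))"
    by (rule prod_sum_PiE) (use fB fK in auto)
  also have "\<dots> = (\<Sum>f\<in>PiE B (\<lambda>_. Pow K - {{}}). \<Prod>v\<in>Sigma B f. x v)"
  proof (rule sum.cong[OF refl])
    fix f assume f: "f \<in> PiE B (\<lambda>_. Pow K - {{}})"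
    then have "\<forall>a\<in>B. finite (f a)" using fK by (auto intro: finite_subset)
    then show "(\<Prod>a\<in>B. \<Prod>i\<in>f a. x (a, i)) = (\<Prod>v\<in>Sigma B f. x v)"
      using prod.Sigma[OF fB, of f "\<lambda>a i. x (a,i)"] by simp
  qed
  also have "\<dots> = (\<Sum>A\<in>{A\<in>Pow (V \<times> K). fst ` A = B}. \<Prod>v\<in>A. x v)"
  proof (rule sum.reindex_bij_betw, rule bij_betwI')
    fix f g assume f: "f \<in> PiE B (\<lambda>_. Pow K - {{}})" and g: "g \<in> PiE B (\<lambda>_. Pow K - {{}})"
    show "(Sigma B f = Sigma B g) = (f = g)"
    proof
      assume eq: "Sigma B f = Sigma B g"
      show "f = g"
      proof
        fix a show "f a = g a"
        proof (cases "a \<in> B")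
          case True
          then show ?thesis using eq by blast
        next
          case False
          then show ?thesis using f g by (auto simp: PiE_def extensional_def)
        qed
      qed
    qed simp
  next
    fix f assume f: "f \<in> PiE B (\<lambda>_. Pow K - {{}})"
    show "Sigma B f \<in> {A\<in>Pow (V \<times> K). fst ` A = B}"
    proof (simp, intro conjI)
      show "Sigma B f \<subseteq> V \<times> K" using f BV by (auto simp: PiE_def Pi_def)
      show "fst ` Sigma B f = B"
      proof
        show "fst ` Sigma B f \<subseteq> B" by auto
        show "B \<subseteq> fst ` Sigma B f"
        proof
          fix a assume a: "a \<in> B"
          then obtain i where "i \<in> f a" using f by (auto simp: PiE_def Pi_def)
          then show "a \<in> fst ` Sigma B f" using a by force
        qed
      qed
    qed
  next
    fix A assume A: "A \<in> {A\<in>Pow (V \<times> K). fst ` A = B}"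
    define f where "f = restrict (\<lambda>a. {i. (a, i) \<in> A}) B"
    have "f \<in> PiE B (\<lambda>_. Pow K - {{}})"
      using A by (auto simp: f_def PiE_def Pi_def)
    moreover have "A = Sigma B f" using A sigma_restrict unfolding f_def by blast
    ultimately show "\<exists>f\<in>PiE B (\<lambda>_. Pow K - {{}}). A = Sigma B f" by blast
  qed
  finally show ?thesis by simp
qed

theorem mainTheorem3:
  fixes V :: "'a set" and E :: "'a \<Rightarrow> 'a \<Rightarrow> bool" and k :: nat
    and u :: "'r::comm_ring_1" and x :: "'a \<times> nat \<Rightarrow> 'r"
  assumes "finite V"
    and "\<And>a b. E a b = E b a"
    and "k \<ge> 1"
  shows "interlace_P (clone_vertices V k) (clone_adj E) u x
       = interlace_P V E u (\<lambda>a. (\<Prod>i\<in>{1..k}. 1 + x (a, i)) - 1)"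
proof -
  let ?K = "{1..k::nat}"
  have fVK: "finite (Pow (V \<times> ?K))" using assms(1) by simp
  have "interlace_P (clone_vertices V k) (clone_adj E) u x
      = (\<Sum>A\<in>Pow (V \<times> ?K). (\<Prod>v\<in>A. x v) * u ^ f2_rank E (fst ` A))"
    by (simp add: interlace_P_def clone_vertices_def rank_clone)
  also have "\<dots> = (\<Sum>B\<in>Pow V. \<Sum>A\<in>{A. A \<in> Pow (V \<times> ?K) \<and> fst ` A = B}.
                      (\<Prod>v\<in>A. x v) * u ^ f2_rank E (fst ` A))"
    by (rule sum.group[symmetric]) (use assms(1) in auto)
  also have "\<dots> = (\<Sum>B\<in>Pow V. (\<Sum>A\<in>{A\<in>Pow (V \<times> ?K). fst ` A = B}. \<Prod>v\<in>A. x v) * u ^ f2_rank E B)"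
    by (rule sum.cong[OF refl]) (simp add: sum_distrib_right)
  also have "\<dots> = (\<Sum>B\<in>Pow V. (\<Prod>a\<in>B. (\<Prod>i\<in>?K. 1 + x (a, i)) - 1) * u ^ f2_rank E B)"
  proof (rule sum.cong[OF refl])
    fix B assume "B \<in> Pow V"
    then have "B \<subseteq> V" "finite B" using assms(1) finite_subset by auto
    then show "(\<Sum>A\<in>{A\<in>Pow (V \<times> ?K). fst ` A = B}. \<Prod>v\<in>A. x v) * u ^ f2_rank E B
             = (\<Prod>a\<in>B. (\<Prod>i\<in>?K. 1 + x (a, i)) - 1) * u ^ f2_rank E B"
      using key[of ?K B V x] by simp
  qed
  also have "\<dots> = interlace_P V E u (\<lambda>a. (\<Prod>i\<in>{1..k}. 1 + x (a, i)) - 1)"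
    by (simp add: interlace_P_def)
  finally show ?thesis .
qed

end
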